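(* Let $A$ and $D$ be unital $C^*$-algebras and let $X$ be a right Hilbert $A$-module. Suppose $\rho:A\to D$ is a unital injective homomorphism, $V:X\to D$ is a linear map, and $\{u_i\}_{i=1}^n\subset X$, satisfying $V_\xi\rho(a)=V_{\xi a}$, $V_\xi^*V_\eta=\rho(\langle\xi,\eta\rangle_A)$ and $\sum_{i=1}^n V_{u_i}V_{u_i}^*=1$ for all $a\in A$ and $\xi,\eta\in X$. Then $V$ is injective and $\{u_i\}_{i=1}^n$ is a finite basis of $X$. Moreover, if $V_{u_i}^*V_{u_j}=\delta_{ij}1$ for all $i,j$, then $\{u_i\}_{i=1}^n$ is a finite orthonormal basis of $X$.
   Context: A finite set $\{u_i\}_{i=1}^n\subset X$ is a finite basis of $X$ if $\xi=\sum_{i=1}^n u_i\langle u_i,\xi\rangle_A$ for all $\xi\in X$; it is orthonormal if in addition $\langle u_i,u_j\rangle_A=\delta_{ij}1$ for all $i,j$. *)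

theory Defs
  imports "HOL-Analysis.Analysis"
begin

class scaleC =
  fixes scaleC :: "complex \<Rightarrow> 'a \<Rightarrow> 'a" (infixr \<open>*\<^sub>C\<close> 75)

class complex_vector = real_vector + scaleC +
  assumes scaleC_add_right: "c *\<^sub>C (x + y) = c *\<^sub>C x + c *\<^sub>C y"
    and scaleC_add_left: "(c + d) *\<^sub>C x = c *\<^sub>C x + d *\<^sub>C x"
    and scaleC_scaleC: "c *\<^sub>C (d *\<^sub>C x) = (c * d) *\<^sub>C x"
    and scaleC_one: "1 *\<^sub>C x = x"
    and scaleR_scaleC: "scaleR r x = complex_of_real r *\<^sub>C x"

class complex_algebra_1 = complex_vector + ring_1 +
  assumes mult_scaleC_left: "(c *\<^sub>C x) * y = c *\<^sub>C (x * y)"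
    and mult_scaleC_right: "x * (c *\<^sub>C y) = c *\<^sub>C (x * y)"

class unital_cstar_algebra = complex_algebra_1 + real_normed_algebra_1 + banach +
  fixes adj :: "'a \<Rightarrow> 'a"
  assumes norm_scaleC: "norm (c *\<^sub>C x) = cmod c * norm x"
    and adj_add: "adj (x + y) = adj x + adj y"
    and adj_scaleC: "adj (c *\<^sub>C x) = cnj c *\<^sub>C adj x"
    and adj_mult: "adj (x * y) = adj y * adj x"
    and adj_adj: "adj (adj x) = x"
    and cstar_identity: "norm (adj x * x) = (norm x)\<^sup>2"

definition cstar_positive :: "'a::unital_cstar_algebra \<Rightarrow> bool" where
  "cstar_positive a \<longleftrightarrow> (\<exists>b. a = adj b * b)"

definition unital_star_hom :: "('a::unital_cstar_algebra \<Rightarrow> 'd::unital_cstar_algebra) \<Rightarrow> bool" where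
  "unital_star_hom \<rho> \<longleftrightarrow>
     (\<forall>a b. \<rho> (a + b) = \<rho> a + \<rho> b) \<and>
     (\<forall>c a. \<rho> (c *\<^sub>C a) = c *\<^sub>C \<rho> a) \<and>
     (\<forall>a b. \<rho> (a * b) = \<rho> a * \<rho> b) \<and>
     (\<forall>a. \<rho> (adj a) = adj (\<rho> a)) \<and>
     \<rho> 1 = 1"

definition complex_linear :: "('x::complex_vector \<Rightarrow> 'y::complex_vector) \<Rightarrow> bool" where
  "complex_linear f \<longleftrightarrow> (\<forall>x y. f (x + y) = f x + f y) \<and> (\<forall>c x. f (c *\<^sub>C x) = c *\<^sub>C f x)"

text \<open>\<open>act\<close> is the right action \<open>\<xi> \<cdot> a\<close>, \<open>ip\<close> the \<open>A\<close>-valued inner product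
  \<open>\<langle>\<xi>,\<eta>\<rangle>\<^sub>A\<close>, linear in the second variable.\<close>

definition right_hilbert_module ::
  "('x::complex_vector \<Rightarrow> 'a::unital_cstar_algebra \<Rightarrow> 'x) \<Rightarrow> ('x \<Rightarrow> 'x \<Rightarrow> 'a) \<Rightarrow> bool" where
  "right_hilbert_module act ip \<longleftrightarrow>
     \<comment> \<open>right A-module structure compatible with the complex vector space structure\<close>
     (\<forall>\<xi> \<eta> a. act (\<xi> + \<eta>) a = act \<xi> a + act \<eta> a) \<and>
     (\<forall>\<xi> a b. act \<xi> (a + b) = act \<xi> a + act \<xi> b) \<and>
     (\<forall>\<xi> a b. act (act \<xi> a) b = act \<xi> (a * b)) \<and>
     (\<forall>\<xi> c a. act (c *\<^sub>C \<xi>) a = c *\<^sub>C act \<xi> a) \<and>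
     (\<forall>\<xi> c a. act \<xi> (c *\<^sub>C a) = c *\<^sub>C act \<xi> a) \<and>
     \<comment> \<open>A-valued inner product\<close>
     (\<forall>\<xi> \<eta> \<zeta>. ip \<xi> (\<eta> + \<zeta>) = ip \<xi> \<eta> + ip \<xi> \<zeta>) \<and>
     (\<forall>\<xi> \<eta> c. ip \<xi> (c *\<^sub>C \<eta>) = c *\<^sub>C ip \<xi> \<eta>) \<and>
     (\<forall>\<xi> \<eta> a. ip \<xi> (act \<eta> a) = ip \<xi> \<eta> * a) \<and>
     (\<forall>\<xi> \<eta>. adj (ip \<xi> \<eta>) = ip \<eta> \<xi>) \<and>
     (\<forall>\<xi>. cstar_positive (ip \<xi> \<xi>)) \<and>
     (\<forall>\<xi>. ip \<xi> \<xi> = 0 \<longrightarrow> \<xi> = 0) \<and>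
     \<comment> \<open>completeness for the norm \<open>\<parallel>\<xi>\<parallel> = \<parallel>\<langle>\<xi>,\<xi>\<rangle>\<parallel>\<^sup>1\<^sup>/\<^sup>2\<close>\<close>
     (\<forall>s :: nat \<Rightarrow> 'x.
        (\<forall>e>0. \<exists>N. \<forall>m\<ge>N. \<forall>k\<ge>N. sqrt (norm (ip (s m - s k) (s m - s k))) < e) \<longrightarrow>
        (\<exists>l. \<forall>e>0. \<exists>N. \<forall>m\<ge>N. sqrt (norm (ip (s m - l) (s m - l))) < e))"

definition finite_basis ::
  "('x \<Rightarrow> 'a \<Rightarrow> 'x::complex_vector) \<Rightarrow> ('x \<Rightarrow> 'x \<Rightarrow> 'a::unital_cstar_algebra) \<Rightarrow> (nat \<Rightarrow> 'x) \<Rightarrow> nat \<Rightarrow> bool" where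
  "finite_basis act ip u n \<longleftrightarrow> (\<forall>\<xi>. \<xi> = (\<Sum>i=1..n. act (u i) (ip (u i) \<xi>)))"

definition finite_orthonormal_basis ::
  "('x \<Rightarrow> 'a \<Rightarrow> 'x::complex_vector) \<Rightarrow> ('x \<Rightarrow> 'x \<Rightarrow> 'a::unital_cstar_algebra) \<Rightarrow> (nat \<Rightarrow> 'x) \<Rightarrow> nat \<Rightarrow> bool" where
  "finite_orthonormal_basis act ip u n \<longleftrightarrow>
     finite_basis act ip u n \<and>
     (\<forall>i\<in>{1..n}. \<forall>j\<in>{1..n}. ip (u i) (u j) = (if i = j then 1 else 0))"

end

theory Submission
  imports Defs
begin

theorem lemma2p4:
  fixes act :: "'x::complex_vector \<Rightarrow> 'a::unital_cstar_algebra \<Rightarrow> 'x"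
    and ip :: "'x \<Rightarrow> 'x \<Rightarrow> 'a"
    and \<rho> :: "'a \<Rightarrow> 'd::unital_cstar_algebra"
    and V :: "'x \<Rightarrow> 'd"
    and u :: "nat \<Rightarrow> 'x"
    and n :: nat
  assumes X: "right_hilbert_module act ip"
    and rho_hom: "unital_star_hom \<rho>"
    and rho_inj: "inj \<rho>"
    and V_lin: "complex_linear V"
    and V_act: "\<forall>\<xi> a. V \<xi> * \<rho> a = V (act \<xi> a)"
    and V_ip: "\<forall>\<xi> \<eta>. adj (V \<xi>) * V \<eta> = \<rho> (ip \<xi> \<eta>)"
    and V_sum: "(\<Sum>i=1..n. V (u i) * adj (V (u i))) = 1"
  shows "inj V \<and> finite_basis act ip u n \<and>
         ((\<forall>i\<in>{1..n}. \<forall>j\<in>{1..n}. adj (V (u i)) * V (u j) = (if i = j then 1 else 0))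
            \<longrightarrow> finite_orthonormal_basis act ip u n)"
proof -
  interpret AV: additive V using V_lin unfolding complex_linear_def by unfold_locales blast
  interpret AR: additive \<rho> using rho_hom unfolding unital_star_hom_def by unfold_locales blast
  have r1: "\<rho> 1 = 1" using rho_hom unfolding unital_star_hom_def by blast
  have ipz: "ip d d = 0 \<Longrightarrow> d = 0" for d using X unfolding right_hilbert_module_def by blast
  have injV: "inj V"
  proof (rule injI)
    fix x y assume "V x = V y"
    then have "V (x - y) = 0" by (simp add: AV.diff)
    then have "\<rho> (ip (x-y) (x-y)) = \<rho> 0" using V_ip AR.zero by (metis mult_zero_right)
    then have "ip (x-y) (x-y) = 0" using rho_inj by (meson injD)
    then have "x - y = 0" using ipz by blast
    then show "x = y" by simp
  qed
  have fb: "finite_basis act ip u n"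
    unfolding finite_basis_def
  proof
    fix \<xi>
    have "V \<xi> = (\<Sum>i=1..n. V (u i) * adj (V (u i))) * V \<xi>" using V_sum by simp
    also have "\<dots> = (\<Sum>i=1..n. V (u i) * (adj (V (u i)) * V \<xi>))"
      by (simp add: sum_distrib_right mult.assoc)
    also have "\<dots> = (\<Sum>i=1..n. V (act (u i) (ip (u i) \<xi>)))"
      using V_ip V_act by simp
    also have "\<dots> = V (\<Sum>i=1..n. act (u i) (ip (u i) \<xi>))" by (simp add: AV.sum)
    finally show "\<xi> = (\<Sum>i=1..n. act (u i) (ip (u i) \<xi>))" using injV by (meson injD)
  qed
  have "finite_orthonormal_basis act ip u n"
    if H: "\<forall>i\<in>{1..n}. \<forall>j\<in>{1..n}. adj (V (u i)) * V (u j) = (if i = j then 1 else 0)"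
  proof -
    have "ip (u i) (u j) = (if i = j then 1 else 0)" if "i \<in> {1..n}" "j \<in> {1..n}" for i j
    proof -
      have "\<rho> (ip (u i) (u j)) = \<rho> (if i = j then 1 else 0)"
        using H that V_ip r1 AR.zero by (metis (full_types))
      then show ?thesis using injD[OF rho_inj] by blast
    qed
    then show ?thesis using fb unfolding finite_orthonormal_basis_def by blast
  qed
  then show ?thesis using injV fb by blast
qed

end
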